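(* Let $n,T,K$ be positive integers. Let $P_1,\ldots,P_T$ be $n\times n$ matrices and let $\hat P_1,\ldots,\hat P_T$ be arbitrary $n\times n$ matrices (estimates of the $P_i$). Define the $T\times T$ matrices $D$ and $\hat D$ by $D_{ij}=\|P_i-P_j\|_F$ and $\hat D_{ij}=\|\hat P_i-\hat P_j\|_F$. Suppose $D$ has rank $K$. Let $V$ (resp. $\hat V$) be a $T\times K$ matrix whose columns are orthonormal eigenvectors of $D$ (resp. $\hat D$) corresponding to its $K$ eigenvalues of largest absolute value. Let $\gamma$ be the smallest absolute value among the $K$ nonzero eigenvalues of $D$ (equivalently, the $K$-th largest eigenvalue of $D$ in absolute value). Then there exists a $K\times K$ orthogonal matrix $\hat O$ such that \[ \|\hat V\hat O-V\|_F^2\le \frac{64T}{\gamma^2}\sum_{i=1}^T\|\hat P_i-P_i\|_F^2 . \]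
   Context: $\|\cdot\|_F$ denotes the Frobenius norm. In the intended application, $P_i$ is the link probability matrix of the $i$-th observed network on a common set of $n$ nodes (node correspondence present) and $\hat P_i$ is an estimate of it obtained from the observed adjacency matrix. *)

theory Defs
  imports "HOL-Analysis.Analysis"
begin

definition frob :: "real^'n^'m \<Rightarrow> real" where
  "frob A = sqrt (\<Sum>i\<in>UNIV. \<Sum>j\<in>UNIV. (A $ i $ j)\<^sup>2)"

definition diag_mat :: "('t \<Rightarrow> real) \<Rightarrow> real^'t^'t" where
  "diag_mat \<mu> = (\<chi> i j. if i = j then \<mu> i else 0)"

definition dist_mat :: "('t \<Rightarrow> real^'n^'n) \<Rightarrow> real^'t^'t" where
  "dist_mat P = (\<chi> i j. frob (P i - P j))"

definition is_eigenvalue :: "real^'t^'t \<Rightarrow> real \<Rightarrow> bool" where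
  "is_eigenvalue A lam \<longleftrightarrow> (\<exists>v. v \<noteq> 0 \<and> A *v v = lam *\<^sub>R v)"

(* The columns of V (a T x K matrix) are orthonormal eigenvectors of D corresponding
   to its K eigenvalues of largest absolute value (counted with multiplicity):
   V consists of K distinct columns (indices e) of an orthonormal eigenbasis U of D,
   D = U diag(mu) U^T, and every eigenvalue not selected has absolute value at most
   that of every selected one. *)
definition top_abs_eigvecs :: "real^'t^'t \<Rightarrow> real^'k^'t \<Rightarrow> bool" where
  "top_abs_eigvecs D V \<longleftrightarrow>
     (\<exists>(U::real^'t^'t) (\<mu>::'t \<Rightarrow> real) (e::'k \<Rightarrow> 't).
        orthogonal_matrix U \<and> D = U ** diag_mat \<mu> ** transpose U \<and> inj e \<and>
        (\<forall>r c. V $ r $ c = U $ r $ e c) \<and>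
        (\<forall>c t. t \<notin> range e \<longrightarrow> \<bar>\<mu> t\<bar> \<le> \<bar>\<mu> (e c)\<bar>))"

end

theory Submission
  imports Defs
begin

lemma ifmul: "(if b then 1 else 0) * (x::real) = (if b then x else 0)"
  "x * (if b then 1 else 0) = (if b then x else 0)" by auto

lemma orth_cols:
  fixes U :: "real^'n^'n"
  assumes "orthogonal_matrix U"
  shows "(\<Sum>r\<in>UNIV. U$r$i * U$r$j) = (if i = j then 1 else 0)"
proof -
  have "(transpose U ** U)$i$j = (mat 1 :: real^'n^'n)$i$j"
    using assms by (simp add: orthogonal_matrix_def)
  then show ?thesis by (simp add: matrix_matrix_mult_def transpose_def mat_def)
qed

lemma orth_rows:
  fixes U :: "real^'n^'n"
  assumes "orthogonal_matrix U"
  shows "(\<Sum>k\<in>UNIV. U$i$k * U$j$k) = (if i = j then 1 else 0)"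
proof -
  have "(U ** transpose U)$i$j = (mat 1 :: real^'n^'n)$i$j"
    using assms by (simp add: orthogonal_matrix_def)
  then show ?thesis by (simp add: matrix_matrix_mult_def transpose_def mat_def)
qed

lemma parseval:
  fixes W :: "'j::finite \<Rightarrow> 'a::finite \<Rightarrow> real"
  assumes "\<And>a a'. (\<Sum>j\<in>UNIV. W j a * W j a') = (if a = a' then 1 else 0)"
  shows "(\<Sum>j\<in>UNIV. (\<Sum>a\<in>UNIV. W j a * x a)\<^sup>2) = (\<Sum>a\<in>UNIV. (x a)\<^sup>2)"
proof -
  have "(\<Sum>j\<in>UNIV. (\<Sum>a\<in>UNIV. W j a * x a)\<^sup>2)
      = (\<Sum>j\<in>UNIV. \<Sum>a\<in>UNIV. \<Sum>a'\<in>UNIV. x a * x a' * (W j a * W j a'))"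
    by (simp add: power2_eq_square sum_product algebra_simps)
  also have "\<dots> = (\<Sum>a\<in>UNIV. \<Sum>j\<in>UNIV. \<Sum>a'\<in>UNIV. x a * x a' * (W j a * W j a'))"
    by (rule sum.swap)
  also have "\<dots> = (\<Sum>a\<in>UNIV. \<Sum>a'\<in>UNIV. \<Sum>j\<in>UNIV. x a * x a' * (W j a * W j a'))"
    by (rule sum.cong[OF refl], rule sum.swap)
  also have "\<dots> = (\<Sum>a\<in>UNIV. \<Sum>a'\<in>UNIV. x a * x a' * (\<Sum>j\<in>UNIV. W j a * W j a'))"
    by (simp add: sum_distrib_left)
  also have "\<dots> = (\<Sum>a\<in>UNIV. (x a)\<^sup>2)"
    by (simp add: assms power2_eq_square ifmul)
  finally show ?thesis .
qed

lemma bessel: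
  fixes W :: "'j::finite \<Rightarrow> 'a::finite \<Rightarrow> real"
  assumes "\<And>a a'. (\<Sum>j\<in>UNIV. W j a * W j a') = (if a = a' then 1 else 0)"
  shows "(\<Sum>j\<in>J. (\<Sum>a\<in>UNIV. W j a * x a)\<^sup>2) \<le> (\<Sum>a\<in>UNIV. (x a)\<^sup>2)"
proof -
  have "(\<Sum>j\<in>J. (\<Sum>a\<in>UNIV. W j a * x a)\<^sup>2) \<le> (\<Sum>j\<in>UNIV. (\<Sum>a\<in>UNIV. W j a * x a)\<^sup>2)"
    by (rule sum_mono2) auto
  then show ?thesis using parseval[OF assms] by simp
qed

lemma eig_entry:
  fixes U :: "real^'t^'t"
  assumes "D = U ** diag_mat \<mu> ** transpose U"
  shows "D$r$s = (\<Sum>k\<in>UNIV. U$r$k * \<mu> k * U$s$k)"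
proof -
  have 1: "(U ** diag_mat \<mu>)$r$k = U$r$k * \<mu> k" for k
  proof -
    have "(U ** diag_mat \<mu>)$r$k = (\<Sum>l\<in>UNIV. U$r$l * (if l = k then \<mu> l else 0))"
      by (simp add: matrix_matrix_mult_def diag_mat_def)
    also have "\<dots> = (\<Sum>l\<in>UNIV. (if l = k then U$r$l * \<mu> l else 0))"
      by (rule sum.cong) auto
    also have "\<dots> = U$r$k * \<mu> k" by simp
    finally show ?thesis .
  qed
  have "D$r$s = (\<Sum>k\<in>UNIV. (U ** diag_mat \<mu>)$r$k * (transpose U)$k$s)"
    using assms by (simp add: matrix_matrix_mult_def[of "U ** diag_mat \<mu>"])
  then show ?thesis by (simp add: 1 transpose_def)
qed

lemma eig_left:
  fixes U :: "real^'t^'t"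
  assumes "orthogonal_matrix U" "D = U ** diag_mat \<mu> ** transpose U"
  shows "(\<Sum>r\<in>UNIV. U$r$t * D$r$s) = \<mu> t * U$s$t"
proof -
  have "(\<Sum>r\<in>UNIV. U$r$t * D$r$s) = (\<Sum>r\<in>UNIV. \<Sum>k\<in>UNIV. U$r$t * (U$r$k * \<mu> k * U$s$k))"
    by (simp add: eig_entry[OF assms(2)] sum_distrib_left)
  also have "\<dots> = (\<Sum>k\<in>UNIV. \<Sum>r\<in>UNIV. U$r$t * (U$r$k * \<mu> k * U$s$k))"
    by (rule sum.swap)
  also have "\<dots> = (\<Sum>k\<in>UNIV. (\<Sum>r\<in>UNIV. U$r$t * U$r$k) * (\<mu> k * U$s$k))"
    by (rule sum.cong[OF refl]) (simp add: sum_distrib_left sum_distrib_right mult_ac)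
  also have "\<dots> = \<mu> t * U$s$t"
    by (simp add: orth_cols[OF assms(1)] ifmul)
  finally show ?thesis .
qed

lemma eig_right:
  fixes U :: "real^'t^'t"
  assumes "orthogonal_matrix U" "D = U ** diag_mat \<mu> ** transpose U"
  shows "(\<Sum>s\<in>UNIV. D$r$s * U$s$t) = \<mu> t * U$r$t"
proof -
  have "(\<Sum>s\<in>UNIV. D$r$s * U$s$t) = (\<Sum>s\<in>UNIV. \<Sum>k\<in>UNIV. (U$r$k * \<mu> k * U$s$k) * U$s$t)"
    by (simp add: eig_entry[OF assms(2)] sum_distrib_right)
  also have "\<dots> = (\<Sum>k\<in>UNIV. (U$r$k * \<mu> k) * (\<Sum>s\<in>UNIV. U$s$k * U$s$t))"
    by (subst sum.swap) (simp add: sum_distrib_left mult_ac)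
  also have "\<dots> = \<mu> t * U$r$t"
    by (simp add: orth_cols[OF assms(1)] ifmul)
  finally show ?thesis .
qed

lemma E_expand:
  fixes U Uh :: "real^'t^'t"
  assumes U: "orthogonal_matrix U" "D = U ** diag_mat \<mu> ** transpose U"
    and Uh: "orthogonal_matrix Uh" "Dh = Uh ** diag_mat \<mu>h ** transpose Uh"
  shows "(\<Sum>r\<in>UNIV. \<Sum>s\<in>UNIV. (Dh$r$s - D$r$s)\<^sup>2)
       = (\<Sum>j\<in>UNIV. \<Sum>t\<in>UNIV. ((\<mu>h j - \<mu> t) * (\<Sum>r\<in>UNIV. Uh$r$j * U$r$t))\<^sup>2)"
proof -
  define G where "G j s = (\<Sum>r\<in>UNIV. Uh$r$j * (Dh$r$s - D$r$s))" for j s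
  have F: "(\<Sum>s\<in>UNIV. U$s$t * G j s) = (\<mu>h j - \<mu> t) * (\<Sum>r\<in>UNIV. Uh$r$j * U$r$t)" for j t
  proof -
    have "G j s = \<mu>h j * Uh$s$j - (\<Sum>r\<in>UNIV. Uh$r$j * D$r$s)" for s
      unfolding G_def using eig_left[OF Uh, of j s]
      by (simp add: right_diff_distrib sum_subtractf)
    then have "(\<Sum>s\<in>UNIV. U$s$t * G j s)
        = \<mu>h j * (\<Sum>s\<in>UNIV. Uh$s$j * U$s$t) - (\<Sum>s\<in>UNIV. \<Sum>r\<in>UNIV. Uh$r$j * (D$r$s * U$s$t))"
      by (simp add: right_diff_distrib sum_subtractf sum_distrib_left sum_distrib_right mult_ac)
    also have "(\<Sum>s\<in>UNIV. \<Sum>r\<in>UNIV. Uh$r$j * (D$r$s * U$s$t)) = (\<Sum>r\<in>UNIV. Uh$r$j * (\<Sum>s\<in>UNIV. D$r$s * U$s$t))"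
      by (subst sum.swap) (simp add: sum_distrib_left)
    also have "\<dots> = \<mu> t * (\<Sum>r\<in>UNIV. Uh$r$j * U$r$t)"
      by (simp add: eig_right[OF U] sum_distrib_left mult_ac)
    finally show ?thesis by (simp add: algebra_simps)
  qed
  have "(\<Sum>j\<in>UNIV. \<Sum>t\<in>UNIV. ((\<mu>h j - \<mu> t) * (\<Sum>r\<in>UNIV. Uh$r$j * U$r$t))\<^sup>2)
      = (\<Sum>j\<in>UNIV. \<Sum>t\<in>UNIV. (\<Sum>s\<in>UNIV. U$s$t * G j s)\<^sup>2)"
    by (simp add: F)
  also have "\<dots> = (\<Sum>j\<in>UNIV. \<Sum>s\<in>UNIV. (G j s)\<^sup>2)"
    by (rule sum.cong[OF refl], rule parseval[where W="\<lambda>t s. U$s$t"]) (simp add: orth_rows[OF U(1)])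
  also have "\<dots> = (\<Sum>s\<in>UNIV. \<Sum>j\<in>UNIV. (\<Sum>r\<in>UNIV. Uh$r$j * (Dh$r$s - D$r$s))\<^sup>2)"
    unfolding G_def by (rule sum.swap)
  also have "\<dots> = (\<Sum>s\<in>UNIV. \<Sum>r\<in>UNIV. (Dh$r$s - D$r$s)\<^sup>2)"
    by (rule sum.cong[OF refl], rule parseval[where W="\<lambda>j r. Uh$r$j"]) (simp add: orth_rows[OF Uh(1)])
  also have "\<dots> = (\<Sum>r\<in>UNIV. \<Sum>s\<in>UNIV. (Dh$r$s - D$r$s)\<^sup>2)"
    by (rule sum.swap)
  finally show ?thesis ..
qed

definition hh :: "('k::finite \<Rightarrow> real) \<Rightarrow> real^'k^'k" where
  "hh w = (\<chi> i j. (if i = j then 1 else 0) - 2 * w i * w j)"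

definition qf :: "('k::finite \<Rightarrow> 'k \<Rightarrow> real) \<Rightarrow> ('k \<Rightarrow> real) \<Rightarrow> ('k \<Rightarrow> real) \<Rightarrow> real" where
  "qf N a b = (\<Sum>k\<in>UNIV. \<Sum>j\<in>UNIV. a k * N k j * b j)"

lemma delta_sum: "(\<Sum>k\<in>UNIV. \<Sum>j\<in>UNIV. (if k = j then 1 else 0) * N k j) = (\<Sum>k\<in>(UNIV::'k::finite set). (N k k::real))"
proof -
  have "(\<Sum>j\<in>UNIV. (if k = j then 1 else 0) * N k j) = N k k" for k :: 'k
  proof -
    have "(\<Sum>j\<in>UNIV. (if k = j then 1 else 0) * N k j) = (\<Sum>j\<in>UNIV. if j = k then N k j else 0)"
      by (rule sum.cong) auto
    then show ?thesis by simp
  qed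
  then show ?thesis by simp
qed

lemma qf_scale: "(\<Sum>k\<in>UNIV. \<Sum>j\<in>UNIV. (c * a k * b j) * N k j) = c * qf N a b"
  by (simp add: qf_def sum_distrib_left mult_ac)

lemma hh_prod_entry:
  fixes u w :: "'k::finite \<Rightarrow> real"
  shows "(hh u ** hh w)$k$j = (if k = j then 1 else 0) - 2 * w k * w j - 2 * u k * u j
            + 4 * (\<Sum>l\<in>UNIV. u l * w l) * u k * w j"
proof -
  have "(hh u ** hh w)$k$j = (\<Sum>l\<in>UNIV. ((if k = l then 1 else 0) - 2 * u k * u l) * ((if l = j then 1 else 0) - 2 * w l * w j))"
    by (simp add: matrix_matrix_mult_def hh_def)
  also have "\<dots> = (\<Sum>l\<in>UNIV. (if l = k then (if k = j then 1 else 0) else 0)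
        - (if l = k then 2 * w l * w j else 0) - (if l = j then 2 * u k * u l else 0)
        + 4 * u k * (u l * w l) * w j)"
    by (rule sum.cong) (auto simp: algebra_simps)
  also have "\<dots> = (if k = j then 1 else 0) - 2 * w k * w j - 2 * u k * u j
            + (\<Sum>l\<in>UNIV. 4 * u k * (u l * w l) * w j)"
    by (simp add: sum.distrib sum_subtractf)
  also have "(\<Sum>l\<in>UNIV. 4 * u k * (u l * w l) * w j) = 4 * (\<Sum>l\<in>UNIV. u l * w l) * u k * w j"
    by (simp add: sum_distrib_left sum_distrib_right mult_ac)
  finally show ?thesis .
qed

lemma hh_orth:
  fixes w :: "'k::finite \<Rightarrow> real"
  assumes "(\<Sum>l\<in>UNIV. w l * w l) = 1"
  shows "orthogonal_matrix (hh w)"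
proof -
  have "transpose (hh w) = hh w" by (simp add: hh_def transpose_def vec_eq_iff mult_ac)
  moreover have "hh w ** hh w = mat 1"
    by (simp add: vec_eq_iff hh_prod_entry assms mat_def)
  ultimately show ?thesis by (simp add: orthogonal_matrix)
qed

lemma pair_split:
  "(\<Sum>k\<in>UNIV. \<Sum>j\<in>UNIV. (a k j - b k j - c k j + d k j) * (N k j::real))
   = (\<Sum>k\<in>UNIV. \<Sum>j\<in>UNIV. a k j * N k j) - (\<Sum>k\<in>UNIV. \<Sum>j\<in>UNIV. b k j * N k j)
     - (\<Sum>k\<in>UNIV. \<Sum>j\<in>UNIV. c k j * N k j) + (\<Sum>k\<in>UNIV. \<Sum>j\<in>UNIV. d k j * N k j)"
  by (simp add: algebra_simps sum.distrib sum_subtractf)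

lemma hh_prod_pair:
  fixes u w :: "'k::finite \<Rightarrow> real" and N :: "'k \<Rightarrow> 'k \<Rightarrow> real"
  shows "(\<Sum>k\<in>UNIV. \<Sum>j\<in>UNIV. (hh u ** hh w)$k$j * N k j)
     = (\<Sum>k\<in>UNIV. N k k) - 2 * qf N w w - 2 * qf N u u + 4 * (\<Sum>l\<in>UNIV. u l * w l) * qf N u w"
  unfolding hh_prod_entry pair_split delta_sum qf_scale ..

lemma hh_pair:
  fixes w :: "'k::finite \<Rightarrow> real" and N :: "'k \<Rightarrow> 'k \<Rightarrow> real"
  shows "(\<Sum>k\<in>UNIV. \<Sum>j\<in>UNIV. (hh w)$k$j * N k j) = (\<Sum>k\<in>UNIV. N k k) - 2 * qf N w w"
proof -
  have "(\<Sum>k\<in>UNIV. \<Sum>j\<in>UNIV. (hh w)$k$j * N k j)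
     = (\<Sum>k\<in>UNIV. \<Sum>j\<in>UNIV. ((if k = j then 1 else 0) - 2 * w k * w j - 0 + 0) * N k j)"
    by (simp add: hh_def)
  also have "\<dots> = (\<Sum>k\<in>UNIV. N k k) - 2 * qf N w w"
    unfolding pair_split delta_sum qf_scale by simp
  finally show ?thesis .
qed

lemma max_orth:
  fixes M :: "real^'k::finite^'k"
  shows "\<exists>Ob. orthogonal_matrix Ob \<and> (\<forall>Q. orthogonal_matrix Q \<longrightarrow> inner Q M \<le> inner Ob M)"
proof -
  let ?S = "{Ob::real^'k^'k. transpose Ob ** Ob = mat 1}"
  have S: "?S = {Ob. orthogonal_matrix Ob}" by (simp add: orthogonal_matrix)
  have cont: "continuous_on UNIV (\<lambda>Ob::real^'k^'k. transpose Ob ** Ob)"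
    unfolding matrix_matrix_mult_def transpose_def
    by (intro continuous_intros)
  have closed: "closed ?S"
    by (rule closed_Collect_eq[OF cont]) (intro continuous_intros)
  have "norm Ob \<le> real CARD('k)" if "Ob \<in> ?S" for Ob :: "real^'k^'k"
  proof -
    have o: "orthogonal_matrix Ob" using that S by auto
    have r: "norm (Ob$i) = 1" for i
    proof -
      have "row i Ob = Ob$i" by (simp add: row_def vec_eq_iff)
      then show ?thesis using o by (metis orthogonal_matrix_orthonormal_rows)
    qed
    have "norm Ob = L2_set (\<lambda>i. norm (Ob$i)) UNIV" by (simp add: norm_vec_def)
    also have "\<dots> \<le> (\<Sum>i\<in>UNIV. norm (Ob$i))" by (rule L2_set_le_sum) simp
    also have "\<dots> = real CARD('k)" by (simp add: r)
    finally show ?thesis .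
  qed
  then have "bounded ?S" unfolding bounded_iff by blast
  with closed have "compact ?S" by (simp add: compact_eq_bounded_closed)
  moreover have "mat 1 \<in> ?S" by (simp add: transpose_mat)
  then have "?S \<noteq> {}" by blast
  moreover have "continuous_on ?S (\<lambda>Ob. inner Ob M)" by (intro continuous_intros)
  ultimately obtain Ob where "Ob \<in> ?S" "\<forall>Q\<in>?S. inner Q M \<le> inner Ob M"
    using continuous_attains_sup[of ?S "\<lambda>Ob. inner Ob M"] by auto
  then show ?thesis using S by auto
qed

lemma inner_mat: "inner (A::real^'k::finite^'m::finite) B = (\<Sum>i\<in>UNIV. \<Sum>j\<in>UNIV. A$i$j * B$i$j)"
  by (simp add: inner_vec_def)

lemma sum1: "(\<Sum>j\<in>UNIV. (if j = (p::'a::finite) then 1 else 0) * (f j::real)) = f p"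
proof -
  have "(\<Sum>j\<in>UNIV. (if j = p then 1 else 0) * (f j::real)) = (\<Sum>j\<in>UNIV. if j = p then f j else 0)"
    by (rule sum.cong) auto
  then show ?thesis by simp
qed

lemma sum2:
  assumes "(p::'a::finite) \<noteq> q"
  shows "(\<Sum>j\<in>UNIV. (if j = p then x else if j = q then y else 0) * (f j::real)) = x * f p + y * f q"
proof -
  have "(\<Sum>j\<in>UNIV. (if j = p then x else if j = q then y else 0) * (f j::real))
      = (\<Sum>j\<in>UNIV. (if j = p then x * f j else 0) + (if j = q then y * f j else 0))"
    by (rule sum.cong) (use assms in auto)
  then show ?thesis by (simp add: sum.distrib)
qed

lemma qf_alt: "qf N a b = (\<Sum>k\<in>UNIV. a k * (\<Sum>j\<in>UNIV. b j * N k j))"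
  by (simp add: qf_def sum_distrib_left mult_ac)

lemma qf_scale2: "qf N (\<lambda>k. c * u k) (\<lambda>k. c * u k) = c\<^sup>2 * qf N u u"
  by (simp add: qf_def sum_distrib_left mult_ac power2_eq_square)

lemma qf_diff: "qf N (\<lambda>k. a k - b k) (\<lambda>k. a k - b k) = qf N a a - qf N a b - qf N b a + qf N b b"
  by (simp add: qf_def algebra_simps sum_subtractf sum.distrib)

lemma amgm: "(a::real) * b \<le> (a\<^sup>2 + b\<^sup>2) / 2"
proof -
  have "0 \<le> (a - b)\<^sup>2" by simp
  then show ?thesis by (simp add: power2_diff)
qed

lemma optO:
  fixes M :: "real^'k::finite^'k"
  assumes contr: "\<And>x. (\<Sum>i\<in>UNIV. (\<Sum>j\<in>UNIV. M$i$j * x j)\<^sup>2) \<le> (\<Sum>j\<in>UNIV. (x j)\<^sup>2)"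
  shows "\<exists>Ob. orthogonal_matrix Ob \<and> (\<Sum>i\<in>UNIV. \<Sum>j\<in>UNIV. (M$i$j)\<^sup>2) \<le> inner Ob M"
proof -
  obtain Ob where orthO: "orthogonal_matrix Ob" and maxO: "\<And>Q. orthogonal_matrix Q \<Longrightarrow> inner Q M \<le> inner Ob M"
    using max_orth[of M] by blast
  define N where "N k j = (\<Sum>i\<in>UNIV. Ob$i$k * M$i$j)" for k j
  have trN: "inner Ob M = (\<Sum>k\<in>UNIV. N k k)"
    unfolding inner_mat N_def by (rule sum.swap)
  have prodQ: "inner (Ob ** Q) M = (\<Sum>k\<in>UNIV. \<Sum>j\<in>UNIV. Q$k$j * N k j)" for Q :: "real^'k^'k"
  proof -
    have "inner (Ob ** Q) M = (\<Sum>i\<in>UNIV. \<Sum>j\<in>UNIV. \<Sum>k\<in>UNIV. Ob$i$k * Q$k$j * M$i$j)"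
      by (simp add: inner_mat matrix_matrix_mult_def sum_distrib_right)
    also have "\<dots> = (\<Sum>j\<in>UNIV. \<Sum>i\<in>UNIV. \<Sum>k\<in>UNIV. Ob$i$k * Q$k$j * M$i$j)"
      by (rule sum.swap)
    also have "\<dots> = (\<Sum>j\<in>UNIV. \<Sum>k\<in>UNIV. \<Sum>i\<in>UNIV. Ob$i$k * Q$k$j * M$i$j)"
      by (rule sum.cong[OF refl], rule sum.swap)
    also have "\<dots> = (\<Sum>k\<in>UNIV. \<Sum>j\<in>UNIV. \<Sum>i\<in>UNIV. Ob$i$k * Q$k$j * M$i$j)"
      by (rule sum.swap)
    also have "\<dots> = (\<Sum>k\<in>UNIV. \<Sum>j\<in>UNIV. Q$k$j * N k j)"
      by (simp add: N_def sum_distrib_left mult_ac)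
    finally show ?thesis .
  qed
  have key: "(\<Sum>k\<in>UNIV. \<Sum>j\<in>UNIV. Q$k$j * N k j) \<le> (\<Sum>k\<in>UNIV. N k k)" if "orthogonal_matrix Q" for Q
    using maxO[of "Ob ** Q"] orthogonal_matrix_mul[OF orthO that] prodQ trN by simp
  have psd: "0 \<le> qf N u u" for u
  proof (cases "(\<Sum>l\<in>UNIV. u l * u l) = 0")
    case True
    then have "\<forall>l\<in>UNIV. u l * u l = 0"
      by (subst sum_nonneg_eq_0_iff[symmetric]) auto
    then have "u = (\<lambda>l. 0)" by auto
    then show ?thesis by (simp add: qf_def)
  next
    case False
    define s where "s = (\<Sum>l\<in>UNIV. u l * u l)"
    have "0 \<le> s" unfolding s_def by (intro sum_nonneg) simp
    then have s: "s > 0" using False unfolding s_def by linarith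
    define c where "c = 1 / sqrt s"
    define w where "w k = c * u k" for k
    have "(\<Sum>l\<in>UNIV. w l * w l) = c\<^sup>2 * s"
      by (simp add: w_def s_def sum_distrib_left mult_ac power2_eq_square)
    also have "\<dots> = 1" using s by (simp add: c_def power_divide)
    finally have w1: "(\<Sum>l\<in>UNIV. w l * w l) = 1" .
    have "0 \<le> qf N w w"
      using key[OF hh_orth[OF w1]] hh_pair[of w N] by simp
    also have "qf N w w = c\<^sup>2 * qf N u u"
      unfolding w_def by (rule qf_scale2)
    finally show ?thesis using s by (simp add: c_def power_divide zero_le_divide_iff)
  qed
  have diagN: "qf N (\<lambda>k. if k = p then 1 else 0) (\<lambda>k. if k = p then 1 else 0) = N p p" for p
    by (simp add: qf_alt sum1)
  have sym: "N p q = N q p" for p q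
  proof (rule ccontr)
    assume ne: "N p q \<noteq> N q p"
    then have pq: "p \<noteq> q" by auto
    define d where "d = N p q - N q p"
    define a where "a = N p p + N q q"
    have a0: "0 \<le> a" unfolding a_def using psd[of "\<lambda>k. if k = p then 1 else 0"] psd[of "\<lambda>k. if k = q then 1 else 0"]
      diagN[of p] diagN[of q] by simp
    have d0: "d \<noteq> 0" using ne d_def by simp
    define r where "r = sqrt ((a+1)*(a+1) + d*d)"
    have "0 < (a+1)*(a+1)" using a0 by (intro mult_pos_pos) auto
    moreover have "0 \<le> d*d" by simp
    ultimately have pos: "0 < (a+1)*(a+1) + d*d" by linarith
    have r0: "r > 0" unfolding r_def using pos by simp
    have r2: "r * r = (a+1)*(a+1) + d*d" unfolding r_def real_sqrt_mult_self using pos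
      by simp
    define x where "x = (a+1) / r"
    define y where "y = d / r"
    have xr: "x * r = a + 1" using r0 by (simp add: x_def)
    have yr: "y * r = d" using r0 by (simp add: y_def)
    have "(x * x + y * y) * (r * r) = (x*r)*(x*r) + (y*r)*(y*r)" by (simp add: algebra_simps)
    also have "\<dots> = r * r" unfolding xr yr r2 ..
    finally have xy1: "x * x + y * y = 1" using r0 by simp
    define u where "u k = (if k = p then 1 else 0::real)" for k
    define w where "w k = (if k = p then x else if k = q then y else 0)" for k
    have u1: "(\<Sum>l\<in>UNIV. u l * u l) = 1" unfolding u_def using sum1[of p "\<lambda>l. if l = p then 1 else 0"] by simp
    have w1: "(\<Sum>l\<in>UNIV. w l * w l) = 1"
      unfolding w_def using sum2[OF pq, of x y "\<lambda>l. if l = p then x else if l = q then y else 0"] pq xy1 by simp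
    have uw: "(\<Sum>l\<in>UNIV. u l * w l) = x"
      unfolding u_def using sum1[of p w] w_def by simp
    have quu: "qf N u u = N p p" unfolding u_def by (rule diagN)
    have quw: "qf N u w = x * N p p + y * N p q"
      unfolding qf_alt u_def w_def sum2[OF pq] sum1 ..
    have qww: "qf N w w = x * (x * N p p + y * N p q) + y * (x * N q p + y * N q q)"
      unfolding qf_alt w_def sum2[OF pq] ..
    have ineq: "(\<Sum>k\<in>UNIV. N k k) - 2 * qf N w w - 2 * qf N u u + 4 * (\<Sum>l\<in>UNIV. u l * w l) * qf N u w
          \<le> (\<Sum>k\<in>UNIV. N k k)"
      using key[OF orthogonal_matrix_mul[OF hh_orth[OF u1] hh_orth[OF w1]]] hh_prod_pair[of u w N] by simp
    have ident: "- 2 * qf N w w - 2 * qf N u u + 4 * (\<Sum>l\<in>UNIV. u l * w l) * qf N u w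
       = 2 * (x * y * d - y * y * a) + 2 * (x * x + y * y - 1) * N p p"
      unfolding uw quu quw qww a_def d_def by (simp add: algebra_simps)
    have "x * y * d \<le> y * y * a" using ineq ident xy1 by simp
    then have "x * y * d * (r * r) \<le> y * y * a * (r * r)"
      by (rule mult_right_mono) simp
    moreover have "x * y * d * (r * r) = (x * r) * (y * r) * d" by (simp add: algebra_simps)
    moreover have "y * y * a * (r * r) = (y * r) * (y * r) * a" by (simp add: algebra_simps)
    ultimately have "(a+1) * d * d \<le> d * d * a" unfolding xr yr by simp
    then have "d * d \<le> 0" by (simp add: algebra_simps)
    moreover have "d * d > 0" using d0 not_real_square_gt_zero by blast
    ultimately show False by linarith
  qed
  have Ncontr: "(\<Sum>k\<in>UNIV. (\<Sum>j\<in>UNIV. N k j * x j)\<^sup>2) \<le> (\<Sum>j\<in>UNIV. (x j)\<^sup>2)" for x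
  proof -
    have e: "(\<Sum>j\<in>UNIV. N k j * x j) = (\<Sum>i\<in>UNIV. Ob$i$k * (\<Sum>j\<in>UNIV. M$i$j * x j))" for k
    proof -
      have "(\<Sum>j\<in>UNIV. N k j * x j) = (\<Sum>j\<in>UNIV. \<Sum>i\<in>UNIV. Ob$i$k * (M$i$j * x j))"
        by (simp add: N_def sum_distrib_left sum_distrib_right mult_ac)
      also have "\<dots> = (\<Sum>i\<in>UNIV. \<Sum>j\<in>UNIV. Ob$i$k * (M$i$j * x j))" by (rule sum.swap)
      also have "\<dots> = (\<Sum>i\<in>UNIV. Ob$i$k * (\<Sum>j\<in>UNIV. M$i$j * x j))" by (simp add: sum_distrib_left)
      finally show ?thesis .
    qed
    have "(\<Sum>k\<in>UNIV. (\<Sum>j\<in>UNIV. N k j * x j)\<^sup>2) = (\<Sum>i\<in>UNIV. (\<Sum>j\<in>UNIV. M$i$j * x j)\<^sup>2)"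
      unfolding e by (rule parseval[where W="\<lambda>k i. Ob$i$k"]) (simp add: orth_rows[OF orthO])
    also have "\<dots> \<le> (\<Sum>j\<in>UNIV. (x j)\<^sup>2)" by (rule contr)
    finally show ?thesis .
  qed
  have col: "(\<Sum>k\<in>UNIV. (N k i)\<^sup>2) \<le> N i i" for i
  proof -
    define y where "y k = N k i" for k
    define dl where "dl k = (if k = i then 1 else 0::real)" for k
    define s where "s = (\<Sum>k\<in>UNIV. (y k)\<^sup>2)"
    have 1: "qf N dl dl = N i i" unfolding dl_def by (rule diagN)
    have 2: "qf N dl y = s"
    proof -
      have "qf N dl y = (\<Sum>j\<in>UNIV. y j * N i j)" unfolding qf_alt dl_def sum1 ..
      also have "\<dots> = (\<Sum>j\<in>UNIV. (y j)\<^sup>2)"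
        by (rule sum.cong[OF refl]) (simp add: y_def sym[of i] power2_eq_square)
      finally show ?thesis by (simp add: s_def)
    qed
    have 3: "qf N y dl = s"
    proof -
      have "qf N y dl = (\<Sum>k\<in>UNIV. y k * N k i)"
        unfolding qf_alt dl_def by (simp add: ifmul)
      then show ?thesis by (simp add: s_def y_def power2_eq_square)
    qed
    have 4: "qf N y y \<le> s"
    proof -
      have "qf N y y = (\<Sum>k\<in>UNIV. y k * (\<Sum>j\<in>UNIV. N k j * y j))"
        by (simp add: qf_alt mult_ac)
      also have "\<dots> \<le> (\<Sum>k\<in>UNIV. ((y k)\<^sup>2 + (\<Sum>j\<in>UNIV. N k j * y j)\<^sup>2) / 2)"
        by (rule sum_mono) (rule amgm)
      also have "\<dots> = (s + (\<Sum>k\<in>UNIV. (\<Sum>j\<in>UNIV. N k j * y j)\<^sup>2)) / 2"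
        unfolding s_def sum_divide_distrib[symmetric] sum.distrib ..
      also have "\<dots> \<le> s" using Ncontr[of y] by (simp add: s_def)
      finally show ?thesis .
    qed
    have "0 \<le> qf N (\<lambda>k. dl k - y k) (\<lambda>k. dl k - y k)" by (rule psd)
    then have "0 \<le> N i i - s - s + qf N y y" unfolding qf_diff 1 2 3 .
    with 4 show ?thesis by (simp add: s_def y_def)
  qed
  have "(\<Sum>i\<in>UNIV. \<Sum>j\<in>UNIV. (M$i$j)\<^sup>2) = (\<Sum>j\<in>UNIV. \<Sum>i\<in>UNIV. (M$i$j)\<^sup>2)" by (rule sum.swap)
  also have "\<dots> = (\<Sum>j\<in>UNIV. \<Sum>k\<in>UNIV. (N k j)\<^sup>2)"
    unfolding N_def
    by (rule sum.cong[OF refl], rule parseval[where W="\<lambda>k i. Ob$i$k", symmetric]) (simp add: orth_rows[OF orthO])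
  also have "\<dots> \<le> (\<Sum>j\<in>UNIV. N j j)" by (rule sum_mono) (rule col)
  also have "\<dots> = inner Ob M" by (rule trN[symmetric])
  finally show ?thesis using orthO by blast
qed

lemma frob_sq: "(frob A)\<^sup>2 = (\<Sum>i\<in>UNIV. \<Sum>j\<in>UNIV. (A$i$j)\<^sup>2)"
  unfolding frob_def by (rule real_sqrt_pow2) (intro sum_nonneg, simp)

lemma frob_norm: "frob (A::real^'n::finite^'m::finite) = norm A"
proof -
  have "norm A = sqrt (inner A A)" by (rule norm_eq_sqrt_inner)
  also have "inner A A = (\<Sum>i\<in>UNIV. \<Sum>j\<in>UNIV. (A$i$j)\<^sup>2)"
    by (simp add: inner_mat power2_eq_square)
  finally show ?thesis by (simp add: frob_def)
qed

lemma E_bound: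
  fixes P Ph :: "'t::finite \<Rightarrow> real^'n::finite^'n"
  shows "(\<Sum>r\<in>UNIV. \<Sum>s\<in>UNIV. (dist_mat Ph $r$s - dist_mat P $r$s)\<^sup>2)
     \<le> 4 * real CARD('t) * (\<Sum>i\<in>UNIV. (frob (Ph i - P i))\<^sup>2)"
proof -
  define a where "a i = norm (Ph i - P i)" for i
  have a0: "0 \<le> a i" for i by (simp add: a_def)
  have tm: "(dist_mat Ph $r$s - dist_mat P $r$s)\<^sup>2 \<le> 2 * (a r)\<^sup>2 + 2 * (a s)\<^sup>2" for r s
  proof -
    have "\<bar>dist_mat Ph $r$s - dist_mat P $r$s\<bar> = \<bar>norm (Ph r - Ph s) - norm (P r - P s)\<bar>"
      by (simp add: dist_mat_def frob_norm)
    also have "\<dots> \<le> norm ((Ph r - Ph s) - (P r - P s))" by (rule norm_triangle_ineq3)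
    also have "(Ph r - Ph s) - (P r - P s) = (Ph r - P r) - (Ph s - P s)" by (simp add: algebra_simps)
    also have "norm \<dots> \<le> a r + a s" unfolding a_def by (rule norm_triangle_ineq4)
    finally have h: "\<bar>dist_mat Ph $r$s - dist_mat P $r$s\<bar> \<le> a r + a s" .
    have "(dist_mat Ph $r$s - dist_mat P $r$s)\<^sup>2 = \<bar>dist_mat Ph $r$s - dist_mat P $r$s\<bar>\<^sup>2" by simp
    also have "\<dots> \<le> (a r + a s)\<^sup>2" by (rule power_mono[OF h]) simp
    also have "\<dots> \<le> 2 * (a r)\<^sup>2 + 2 * (a s)\<^sup>2"
      using amgm[of "a r" "a s"] by (simp add: power2_sum)
    finally show ?thesis .
  qed
  have "(\<Sum>r\<in>UNIV. \<Sum>s\<in>UNIV. (dist_mat Ph $r$s - dist_mat P $r$s)\<^sup>2)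
      \<le> (\<Sum>r\<in>(UNIV::'t set). \<Sum>s\<in>(UNIV::'t set). 2 * (a r)\<^sup>2 + 2 * (a s)\<^sup>2)"
    by (intro sum_mono tm)
  also have "\<dots> = 4 * real CARD('t) * (\<Sum>i\<in>UNIV. (a i)\<^sup>2)"
    by (simp add: sum.distrib sum_distrib_left[symmetric] algebra_simps)
  finally show ?thesis by (simp add: a_def frob_norm)
qed

lemma col_eig:
  fixes U :: "real^'t::finite^'t"
  assumes "orthogonal_matrix U" "D = U ** diag_mat \<mu> ** transpose U"
  shows "D *v column t U = \<mu> t *\<^sub>R column t U"
  by (simp add: vec_eq_iff matrix_vector_mult_def column_def eig_right[OF assms])

lemma column_inner:
  fixes U :: "real^'t::finite^'t"
  assumes "orthogonal_matrix U"
  shows "inner (column t U) (column t' U) = (if t = t' then 1 else 0)"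
  by (simp add: inner_vec_def column_def orth_cols[OF assms])

lemma rank_count:
  fixes U :: "real^'t::finite^'t"
  assumes U: "orthogonal_matrix U" "D = U ** diag_mat \<mu> ** transpose U"
  shows "rank D = card {t. \<mu> t \<noteq> 0}"
proof -
  define Z where "Z = {t. \<mu> t \<noteq> 0}"
  define C where "C t = column t U" for t
  have injC: "inj C"
  proof (rule injI)
    fix t t' assume "C t = C t'"
    then have "inner (C t) (C t') = inner (C t) (C t)" by simp
    then show "t = t'" unfolding C_def column_inner[OF U(1)] by (simp split: if_splits)
  qed
  have ind: "independent (C ` Z)"
  proof (rule pairwise_orthogonal_independent)
    show "pairwise orthogonal (C ` Z)"
      unfolding pairwise_def orthogonal_def C_def using column_inner[OF U(1)] by auto
    show "0 \<notin> C ` Z"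
    proof
      assume "0 \<in> C ` Z"
      then obtain t where "C t = 0" by auto
      then have "inner (C t) (C t) = 0" by simp
      then show False unfolding C_def column_inner[OF U(1)] by simp
    qed
  qed
  have cardCZ: "card (C ` Z) = card Z" using injC by (simp add: card_image inj_on_subset)
  have sub1: "C ` Z \<subseteq> range (\<lambda>x. D *v x)"
  proof
    fix v assume "v \<in> C ` Z"
    then obtain t where t: "t \<in> Z" "v = C t" by auto
    have "D *v ((1 / \<mu> t) *\<^sub>R C t) = (1 / \<mu> t) *\<^sub>R (D *v C t)"
      by (simp add: vec_eq_iff matrix_vector_mult_def sum_distrib_left mult_ac)
    also have "\<dots> = C t" using t(1) by (simp add: C_def col_eig[OF U] Z_def)
    finally show "v \<in> range (\<lambda>x. D *v x)" using t by (metis rangeI)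
  qed
  have sub2: "range (\<lambda>x. D *v x) \<subseteq> span (C ` Z)"
  proof
    fix v assume "v \<in> range (\<lambda>x. D *v x)"
    then obtain x where v: "v = D *v x" by auto
    have "D *v x = (\<Sum>t\<in>Z. (\<mu> t * (\<Sum>s\<in>UNIV. U$s$t * x$s)) *\<^sub>R C t)"
    proof (subst vec_eq_iff, intro allI)
      fix r
      have "(D *v x)$r = (\<Sum>s\<in>UNIV. \<Sum>k\<in>UNIV. U$r$k * \<mu> k * U$s$k * x$s)"
        by (simp add: matrix_vector_mult_def eig_entry[OF U(2)] sum_distrib_right)
      also have "\<dots> = (\<Sum>k\<in>UNIV. \<Sum>s\<in>UNIV. U$r$k * \<mu> k * U$s$k * x$s)" by (rule sum.swap)
      also have "\<dots> = (\<Sum>k\<in>UNIV. (\<mu> k * (\<Sum>s\<in>UNIV. U$s$k * x$s)) * U$r$k)"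
        by (simp add: sum_distrib_left sum_distrib_right mult_ac)
      also have "\<dots> = (\<Sum>k\<in>Z. (\<mu> k * (\<Sum>s\<in>UNIV. U$s$k * x$s)) * U$r$k)"
        by (rule sum.mono_neutral_right) (auto simp: Z_def)
      also have "\<dots> = (\<Sum>t\<in>Z. (\<mu> t * (\<Sum>s\<in>UNIV. U$s$t * x$s)) *\<^sub>R C t)$r"
        by (simp add: C_def column_def)
      finally show "(D *v x)$r = (\<Sum>t\<in>Z. (\<mu> t * (\<Sum>s\<in>UNIV. U$s$t * x$s)) *\<^sub>R C t)$r" .
    qed
    also have "\<dots> \<in> span (C ` Z)"
      by (intro span_sum span_scale span_base) auto
    finally show "v \<in> span (C ` Z)" using v by simp
  qed
  have "card (C ` Z) \<le> dim (range (\<lambda>x. D *v x))"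
    by (rule independent_card_le_dim[OF sub1 ind])
  moreover have "dim (range (\<lambda>x. D *v x)) \<le> card (C ` Z)"
    by (rule dim_le_card[OF sub2]) simp
  ultimately have "dim (range (\<lambda>x. D *v x)) = card Z" using cardCZ by simp
  then show ?thesis unfolding rank_dim_range Z_def .
qed

lemma eigval_in_range:
  fixes U :: "real^'t::finite^'t"
  assumes U: "orthogonal_matrix U" "D = U ** diag_mat \<mu> ** transpose U"
    and ev: "is_eigenvalue D lam"
  shows "\<exists>t. \<mu> t = lam"
proof -
  obtain v where v: "v \<noteq> 0" "D *v v = lam *\<^sub>R v" using ev unfolding is_eigenvalue_def by blast
  define w where "w t = (\<Sum>s\<in>UNIV. U$s$t * v$s)" for t
  have mw: "\<mu> t * w t = lam * w t" for t
  proof -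
    have "(\<Sum>r\<in>UNIV. U$r$t * (D *v v)$r) = (\<Sum>r\<in>UNIV. \<Sum>s\<in>UNIV. U$r$t * (D$r$s * v$s))"
      by (simp add: matrix_vector_mult_def sum_distrib_left)
    also have "\<dots> = (\<Sum>s\<in>UNIV. \<Sum>r\<in>UNIV. U$r$t * (D$r$s * v$s))" by (rule sum.swap)
    also have "\<dots> = (\<Sum>s\<in>UNIV. (\<Sum>r\<in>UNIV. U$r$t * D$r$s) * v$s)"
      by (simp add: sum_distrib_left sum_distrib_right mult_ac)
    also have "\<dots> = (\<Sum>s\<in>UNIV. (\<mu> t * U$s$t) * v$s)"
      by (rule sum.cong[OF refl]) (simp only: eig_left[OF U])
    also have "\<dots> = \<mu> t * w t" by (simp add: w_def sum_distrib_left mult_ac)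
    finally have "(\<Sum>r\<in>UNIV. U$r$t * (D *v v)$r) = \<mu> t * w t" .
    moreover have "(\<Sum>r\<in>UNIV. U$r$t * (D *v v)$r) = lam * w t"
      by (simp add: v(2) w_def sum_distrib_left mult_ac)
    ultimately show ?thesis by auto
  qed
  have "\<exists>t. w t \<noteq> 0"
  proof (rule ccontr)
    assume "\<not> (\<exists>t. w t \<noteq> 0)"
    then have w0: "w t = 0" for t by auto
    have "v$r = 0" for r
    proof -
      have "(\<Sum>t\<in>UNIV. U$r$t * w t) = (\<Sum>t\<in>UNIV. \<Sum>s\<in>UNIV. U$r$t * U$s$t * v$s)"
        by (simp add: w_def sum_distrib_left mult_ac)
      also have "\<dots> = (\<Sum>s\<in>UNIV. \<Sum>t\<in>UNIV. U$r$t * U$s$t * v$s)" by (rule sum.swap)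
      also have "\<dots> = (\<Sum>s\<in>UNIV. (\<Sum>t\<in>UNIV. U$r$t * U$s$t) * v$s)"
        by (simp add: sum_distrib_right)
      also have "\<dots> = v$r" by (simp add: orth_rows[OF U(1)] ifmul)
      finally show ?thesis using w0 by simp
    qed
    then have "v = 0" by (simp add: vec_eq_iff)
    with v(1) show False by simp
  qed
  then obtain t where "w t \<noteq> 0" by blast
  with mw[of t] show ?thesis by auto
qed

lemma inner_mult:
  fixes A :: "real^'n::finite^'m::finite" and B :: "real^'p::finite^'n" and C :: "real^'p^'m"
  shows "inner (A ** B) C = inner B (transpose A ** C)"
proof -
  have "inner (A ** B) C = (\<Sum>i\<in>UNIV. \<Sum>j\<in>UNIV. \<Sum>k\<in>UNIV. A$i$k * B$k$j * C$i$j)"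
    by (simp add: inner_mat matrix_matrix_mult_def sum_distrib_right)
  also have "\<dots> = (\<Sum>j\<in>UNIV. \<Sum>i\<in>UNIV. \<Sum>k\<in>UNIV. A$i$k * B$k$j * C$i$j)"
    by (rule sum.swap)
  also have "\<dots> = (\<Sum>j\<in>UNIV. \<Sum>k\<in>UNIV. \<Sum>i\<in>UNIV. A$i$k * B$k$j * C$i$j)"
    by (rule sum.cong[OF refl], rule sum.swap)
  also have "\<dots> = (\<Sum>k\<in>UNIV. \<Sum>j\<in>UNIV. \<Sum>i\<in>UNIV. A$i$k * B$k$j * C$i$j)"
    by (rule sum.swap)
  also have "\<dots> = inner B (transpose A ** C)"
    by (simp add: inner_mat matrix_matrix_mult_def transpose_def sum_distrib_left mult_ac)
  finally show ?thesis .
qed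

lemma inner_self_orthcols:
  fixes A :: "real^'k::finite^'t::finite"
  assumes "transpose A ** A = mat 1"
  shows "inner A A = real CARD('k)"
proof -
  have d: "(\<Sum>r\<in>UNIV. A$r$c * A$r$c) = 1" for c
  proof -
    have "(transpose A ** A)$c$c = (mat 1 :: real^'k^'k)$c$c" using assms by simp
    then show ?thesis by (simp add: matrix_matrix_mult_def transpose_def mat_def)
  qed
  have "inner A A = (\<Sum>r\<in>UNIV. \<Sum>c\<in>UNIV. A$r$c * A$r$c)" by (simp add: inner_mat)
  also have "\<dots> = (\<Sum>c\<in>(UNIV::'k set). \<Sum>r\<in>UNIV. A$r$c * A$r$c)" by (rule sum.swap)
  also have "\<dots> = real CARD('k)" by (simp add: d)
  finally show ?thesis .
qed

lemma sel_cols_orth: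
  fixes U :: "real^'t::finite^'t" and V :: "real^'k::finite^'t"
  assumes "orthogonal_matrix U" "inj e" "\<forall>r c. V$r$c = U$r$(e c)"
  shows "transpose V ** V = mat 1"
  using assms by (simp add: vec_eq_iff matrix_matrix_mult_def transpose_def mat_def orth_cols inj_eq)

lemma reidx_le:
  assumes "inj (f::'a::finite \<Rightarrow> 'b::finite)" "\<And>x. 0 \<le> (g x::real)"
  shows "(\<Sum>c\<in>UNIV. g (f c)) \<le> (\<Sum>t\<in>UNIV. g t)"
proof -
  have "(\<Sum>c\<in>UNIV. g (f c)) = (\<Sum>t\<in>range f. g t)"
    using assms(1) by (simp add: sum.reindex)
  also have "\<dots> \<le> (\<Sum>t\<in>UNIV. g t)" by (rule sum_mono2) (auto simp: assms(2))
  finally show ?thesis .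
qed

lemma sub_le:
  assumes "\<And>x. 0 \<le> (g x::real)"
  shows "(\<Sum>t\<in>A. g t) \<le> (\<Sum>t\<in>(UNIV::'b::finite set). g t)"
  by (rule sum_mono2) (auto simp: assms)

lemma split_range:
  assumes "inj (f::'a::finite \<Rightarrow> 'b::finite)"
  shows "(\<Sum>t\<in>UNIV. (g t::real)) = (\<Sum>c\<in>UNIV. g (f c)) + (\<Sum>t\<in>- range f. g t)"
proof -
  have "(\<Sum>t\<in>UNIV. g t) = (\<Sum>t\<in>UNIV - range f. g t) + (\<Sum>t\<in>range f. g t)"
    by (rule sum.subset_diff) auto
  also have "(\<Sum>t\<in>range f. g t) = (\<Sum>c\<in>UNIV. g (f c))"
    using assms by (simp add: sum.reindex)
  finally show ?thesis by (simp add: Compl_eq_Diff_UNIV)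
qed

theorem theorem1:
  fixes P Ph :: "'t::finite \<Rightarrow> real^'n::finite^'n"
    and V Vh :: "real^'k::finite^'t"
    and \<gamma> :: real
  assumes rankD: "rank (dist_mat P) = CARD('k)"
    and V: "top_abs_eigvecs (dist_mat P) V"
    and Vh: "top_abs_eigvecs (dist_mat Ph) Vh"
    and gamma: "\<gamma> = Min {\<bar>lam\<bar> | lam. lam \<noteq> 0 \<and> is_eigenvalue (dist_mat P) lam}"
  shows "\<exists>Oh::real^'k^'k. orthogonal_matrix Oh \<and>
           (frob (Vh ** Oh - V))\<^sup>2
             \<le> 64 * real CARD('t) / \<gamma>\<^sup>2 * (\<Sum>i\<in>UNIV. (frob (Ph i - P i))\<^sup>2)"
proof -
  define D where "D = dist_mat P"
  define Dh where "Dh = dist_mat Ph"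
  define K where "K = real CARD('k)"
  define T where "T = real CARD('t)"
  define SP where "SP = (\<Sum>i\<in>UNIV. (frob (Ph i - P i))\<^sup>2)"
  obtain U \<mu> and e :: "'k \<Rightarrow> 't" where U: "orthogonal_matrix U" "D = U ** diag_mat \<mu> ** transpose U"
    and inje: "inj e" and Ve: "\<forall>r c. V$r$c = U$r$(e c)"
    and tope: "\<forall>c t. t \<notin> range e \<longrightarrow> \<bar>\<mu> t\<bar> \<le> \<bar>\<mu> (e c)\<bar>"
    using V unfolding top_abs_eigvecs_def D_def by blast
  obtain Uh \<mu>h and eh :: "'k \<Rightarrow> 't" where Uh: "orthogonal_matrix Uh" "Dh = Uh ** diag_mat \<mu>h ** transpose Uh"
    and injeh: "inj eh" and Vhe: "\<forall>r c. Vh$r$c = Uh$r$(eh c)"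
    and topeh: "\<forall>c t. t \<notin> range eh \<longrightarrow> \<bar>\<mu>h t\<bar> \<le> \<bar>\<mu>h (eh c)\<bar>"
    using Vh unfolding top_abs_eigvecs_def Dh_def by blast
  have cardZ: "card {t. \<mu> t \<noteq> 0} = CARD('k)" using rankD rank_count[OF U] D_def by simp
  have cardE: "card (range e) = CARD('k)" using inje by (simp add: card_image)
  have zero_out: "\<mu> t = 0" if "t \<notin> range e" for t
  proof (rule ccontr)
    assume nz: "\<mu> t \<noteq> 0"
    have "insert t (range e) \<subseteq> {t. \<mu> t \<noteq> 0}"
    proof
      fix x assume "x \<in> insert t (range e)"
      then show "x \<in> {t. \<mu> t \<noteq> 0}"
      proof
        assume "x = t" then show ?thesis using nz by simp
      next
        assume "x \<in> range e"
        then obtain c where "x = e c" by auto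
        moreover have "\<bar>\<mu> t\<bar> \<le> \<bar>\<mu> (e c)\<bar>" using tope that by blast
        ultimately show ?thesis using nz by auto
      qed
    qed
    then have "card (insert t (range e)) \<le> card {t. \<mu> t \<noteq> 0}" by (rule card_mono[rotated]) simp
    then show False using that cardZ cardE by simp
  qed
  have Zeq: "{t. \<mu> t \<noteq> 0} = range e"
  proof -
    have "{t. \<mu> t \<noteq> 0} \<subseteq> range e" using zero_out by blast
    then show ?thesis using card_subset_eq[of "range e" "{t. \<mu> t \<noteq> 0}"] cardZ cardE by simp
  qed
  have nz_in: "\<mu> (e c) \<noteq> 0" for c using Zeq by blast
  define S where "S = {\<bar>lam\<bar> | lam. lam \<noteq> 0 \<and> is_eigenvalue D lam}"
  have gS: "\<gamma> = Min S" using gamma by (simp add: D_def S_def)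
  have "S \<subseteq> range (\<lambda>t. \<bar>\<mu> t\<bar>)"
    unfolding S_def using eigval_in_range[OF U] by blast
  then have finS: "finite S" by (rule finite_subset) simp
  have inS: "\<bar>\<mu> (e c)\<bar> \<in> S" for c
  proof -
    have "column (e c) U \<noteq> 0"
    proof
      assume "column (e c) U = 0"
      then have "inner (column (e c) U) (column (e c) U) = 0" by simp
      then show False using column_inner[OF U(1)] by simp
    qed
    then have "is_eigenvalue D (\<mu> (e c))"
      unfolding is_eigenvalue_def using col_eig[OF U] by blast
    then show ?thesis unfolding S_def using nz_in by blast
  qed
  have gle: "\<gamma> \<le> \<bar>\<mu> (e c)\<bar>" for c using Min_le[OF finS inS] gS by simp
  have gpos: "\<gamma> > 0"
  proof -
    have "S \<noteq> {}" using inS by blast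
    then have "\<gamma> \<in> S" using Min_in[OF finS] gS by simp
    then show ?thesis unfolding S_def by auto
  qed
  define B where "B = transpose Uh ** U"
  have orthB: "orthogonal_matrix B" unfolding B_def
    using orthogonal_matrix_mul[of "transpose Uh" U] U(1) Uh(1) by simp
  have Bent: "B$j$t = (\<Sum>r\<in>UNIV. Uh$r$j * U$r$t)" for j t
    by (simp add: B_def matrix_matrix_mult_def transpose_def)
  define Etot where "Etot = (\<Sum>j\<in>UNIV. \<Sum>t\<in>UNIV. ((\<mu>h j - \<mu> t) * B$j$t)\<^sup>2)"
  have Eeq: "(\<Sum>r\<in>UNIV. \<Sum>s\<in>UNIV. (Dh$r$s - D$r$s)\<^sup>2) = Etot"
    unfolding Etot_def Bent by (rule E_expand[OF U Uh])
  have Ebd: "Etot \<le> 4 * T * SP"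
    using E_bound[of Ph P] Eeq unfolding D_def Dh_def T_def SP_def by simp
  have Enn: "0 \<le> ((\<mu>h j - \<mu> t) * B$j$t)\<^sup>2" for j t by simp
  define X2 where "X2 = (\<Sum>j\<in>- range eh. \<Sum>c\<in>UNIV. (B$j$(e c))\<^sup>2)"
  define M where "M = transpose Vh ** V"
  have Ment: "M$c'$c = B$(eh c')$(e c)" for c' c
    by (simp add: M_def matrix_matrix_mult_def transpose_def Vhe Ve Bent)
  have colsum: "(\<Sum>j\<in>UNIV. (B$j$t)\<^sup>2) = 1" for t
    using orth_cols[OF orthB, of t t] by (simp add: power2_eq_square)
  have rowsum: "(\<Sum>t\<in>UNIV. (B$j$t)\<^sup>2) = 1" for j
    using orth_rows[OF orthB, of j j] by (simp add: power2_eq_square)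
  have Msq: "(\<Sum>c'\<in>UNIV. \<Sum>c\<in>UNIV. (M$c'$c)\<^sup>2) = K - X2"
  proof -
    have "(\<Sum>c'\<in>UNIV. \<Sum>c\<in>UNIV. (M$c'$c)\<^sup>2) = (\<Sum>c\<in>UNIV. \<Sum>c'\<in>UNIV. (B$(eh c')$(e c))\<^sup>2)"
      unfolding Ment by (rule sum.swap)
    also have "\<dots> = (\<Sum>c\<in>UNIV. 1 - (\<Sum>j\<in>- range eh. (B$j$(e c))\<^sup>2))"
    proof (rule sum.cong[OF refl])
      fix c
      show "(\<Sum>c'\<in>UNIV. (B$(eh c')$(e c))\<^sup>2) = 1 - (\<Sum>j\<in>- range eh. (B$j$(e c))\<^sup>2)"
        using split_range[OF injeh, of "\<lambda>j. (B$j$(e c))\<^sup>2"] colsum[of "e c"] by simp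
    qed
    also have "\<dots> = K - X2" by (simp add: K_def X2_def sum_subtractf sum.swap[of _ "- range eh"])
    finally show ?thesis .
  qed
  have Yeq: "(\<Sum>c'\<in>UNIV. \<Sum>t\<in>- range e. (B$(eh c')$t)\<^sup>2) = X2"
  proof -
    have "(\<Sum>c'\<in>UNIV. \<Sum>t\<in>- range e. (B$(eh c')$t)\<^sup>2)
        = (\<Sum>c'\<in>UNIV. 1 - (\<Sum>c\<in>UNIV. (M$c'$c)\<^sup>2))"
    proof (rule sum.cong[OF refl])
      fix c'
      show "(\<Sum>t\<in>- range e. (B$(eh c')$t)\<^sup>2) = 1 - (\<Sum>c\<in>UNIV. (M$c'$c)\<^sup>2)"
        using split_range[OF inje, of "\<lambda>t. (B$(eh c')$t)\<^sup>2"] rowsum[of "eh c'"] by (simp add: Ment)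
    qed
    also have "\<dots> = K - (K - X2)" by (simp add: K_def sum_subtractf Msq)
    finally show ?thesis by simp
  qed
  \<comment> \<open>sin theta bound\<close>
  have main6: "\<gamma>\<^sup>2 * X2 \<le> 4 * Etot"
  proof (cases "\<forall>j\<in>- range eh. \<bar>\<mu>h j\<bar> \<le> \<gamma> / 2")
    case True
    have pt: "\<gamma>\<^sup>2 / 4 * (B$j$(e c))\<^sup>2 \<le> ((\<mu>h j - \<mu> (e c)) * B$j$(e c))\<^sup>2" if "j \<in> - range eh" for j c
    proof -
      have h: "\<bar>\<mu>h j\<bar> \<le> \<gamma> / 2" using True that by blast
      have "\<gamma> / 2 \<le> \<bar>\<mu>h j - \<mu> (e c)\<bar>" using h gle[of c] by arith
      then have "(\<gamma> / 2)\<^sup>2 \<le> \<bar>\<mu>h j - \<mu> (e c)\<bar>\<^sup>2" by (rule power_mono) (use gpos in simp)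
      then have "\<gamma>\<^sup>2 / 4 \<le> (\<mu>h j - \<mu> (e c))\<^sup>2" by (simp add: power_divide)
      then have "\<gamma>\<^sup>2 / 4 * (B$j$(e c))\<^sup>2 \<le> (\<mu>h j - \<mu> (e c))\<^sup>2 * (B$j$(e c))\<^sup>2"
        by (rule mult_right_mono) simp
      then show ?thesis by (simp add: power_mult_distrib)
    qed
    have "\<gamma>\<^sup>2 * X2 = 4 * (\<Sum>j\<in>- range eh. \<Sum>c\<in>UNIV. \<gamma>\<^sup>2 / 4 * (B$j$(e c))\<^sup>2)"
      by (simp add: X2_def sum_distrib_left)
    also have "\<dots> \<le> 4 * (\<Sum>j\<in>- range eh. \<Sum>c\<in>UNIV. ((\<mu>h j - \<mu> (e c)) * B$j$(e c))\<^sup>2)"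
      using pt by (intro mult_left_mono sum_mono) auto
    also have "\<dots> \<le> 4 * (\<Sum>j\<in>- range eh. \<Sum>t\<in>UNIV. ((\<mu>h j - \<mu> t) * B$j$t)\<^sup>2)"
      by (intro mult_left_mono sum_mono reidx_le[OF inje]) auto
    also have "\<dots> \<le> 4 * Etot"
      unfolding Etot_def by (intro mult_left_mono sub_le sum_nonneg) auto
    finally show ?thesis .
  next
    case False
    then obtain j0 where j0: "j0 \<notin> range eh" "\<bar>\<mu>h j0\<bar> > \<gamma> / 2" by auto
    have pt: "\<gamma>\<^sup>2 / 4 * (B$(eh c')$t)\<^sup>2 \<le> ((\<mu>h (eh c') - \<mu> t) * B$(eh c')$t)\<^sup>2" if "t \<in> - range e" for c' t
    proof -
      have m0: "\<mu> t = 0" using zero_out[of t] that by simp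
      have "\<bar>\<mu>h j0\<bar> \<le> \<bar>\<mu>h (eh c')\<bar>" using topeh j0(1) by blast
      then have "\<gamma> / 2 \<le> \<bar>\<mu>h (eh c')\<bar>" using j0(2) by linarith
      then have "\<gamma> / 2 \<le> \<bar>\<mu>h (eh c') - \<mu> t\<bar>" using m0 by simp
      then have "(\<gamma> / 2)\<^sup>2 \<le> \<bar>\<mu>h (eh c') - \<mu> t\<bar>\<^sup>2" by (rule power_mono) (use gpos in simp)
      then have "\<gamma>\<^sup>2 / 4 \<le> (\<mu>h (eh c') - \<mu> t)\<^sup>2" by (simp add: power_divide)
      then have "\<gamma>\<^sup>2 / 4 * (B$(eh c')$t)\<^sup>2 \<le> (\<mu>h (eh c') - \<mu> t)\<^sup>2 * (B$(eh c')$t)\<^sup>2"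
        by (rule mult_right_mono) simp
      then show ?thesis by (simp add: power_mult_distrib)
    qed
    have "\<gamma>\<^sup>2 * X2 = 4 * (\<Sum>c'\<in>UNIV. \<Sum>t\<in>- range e. \<gamma>\<^sup>2 / 4 * (B$(eh c')$t)\<^sup>2)"
      by (simp add: Yeq[symmetric] sum_distrib_left)
    also have "\<dots> \<le> 4 * (\<Sum>c'\<in>UNIV. \<Sum>t\<in>- range e. ((\<mu>h (eh c') - \<mu> t) * B$(eh c')$t)\<^sup>2)"
      using pt by (intro mult_left_mono sum_mono) auto
    also have "\<dots> \<le> 4 * (\<Sum>c'\<in>UNIV. \<Sum>t\<in>UNIV. ((\<mu>h (eh c') - \<mu> t) * B$(eh c')$t)\<^sup>2)"
      by (intro mult_left_mono sum_mono sub_le) auto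
    also have "\<dots> \<le> 4 * Etot"
      unfolding Etot_def by (intro mult_left_mono reidx_le[OF injeh] sum_nonneg) auto
    finally show ?thesis .
  qed
  have contr: "(\<Sum>c'\<in>UNIV. (\<Sum>c\<in>UNIV. M$c'$c * x c)\<^sup>2) \<le> (\<Sum>c\<in>UNIV. (x c)\<^sup>2)" for x
  proof -
    have "(\<Sum>c'\<in>UNIV. (\<Sum>c\<in>UNIV. M$c'$c * x c)\<^sup>2) = (\<Sum>c'\<in>UNIV. (\<Sum>c\<in>UNIV. B$(eh c')$(e c) * x c)\<^sup>2)"
      by (simp add: Ment)
    also have "\<dots> \<le> (\<Sum>j\<in>UNIV. (\<Sum>c\<in>UNIV. B$j$(e c) * x c)\<^sup>2)"
      by (rule reidx_le[OF injeh]) simp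
    also have "\<dots> = (\<Sum>c\<in>UNIV. (x c)\<^sup>2)"
      by (rule parseval) (simp add: orth_cols[OF orthB] inj_eq[OF inje])
    finally show ?thesis .
  qed
  obtain Ob where orthO: "orthogonal_matrix Ob"
    and ineq: "(\<Sum>i\<in>UNIV. \<Sum>j\<in>UNIV. (M$i$j)\<^sup>2) \<le> inner Ob M"
    using optO[of M] contr by blast
  have VtV: "transpose V ** V = mat 1" by (rule sel_cols_orth[OF U(1) inje Ve])
  have VhtVh: "transpose Vh ** Vh = mat 1" by (rule sel_cols_orth[OF Uh(1) injeh Vhe])
  have frobeq: "(frob (Vh ** Ob - V))\<^sup>2 = 2 * K - 2 * inner Ob M"
  proof -
    have "(frob (Vh ** Ob - V))\<^sup>2 = inner (Vh ** Ob - V) (Vh ** Ob - V)"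
      by (simp add: frob_norm power2_norm_eq_inner)
    also have "\<dots> = inner (Vh ** Ob) (Vh ** Ob) - 2 * inner (Vh ** Ob) V + inner V V"
      by (simp add: inner_diff_left inner_diff_right inner_commute)
    also have "inner (Vh ** Ob) (Vh ** Ob) = inner Ob Ob"
      by (simp add: inner_mult matrix_mul_assoc VhtVh)
    also have "inner Ob Ob = K"
      using orthO by (simp add: inner_self_orthcols orthogonal_matrix_def K_def)
    also have "inner (Vh ** Ob) V = inner Ob M" by (simp add: inner_mult M_def)
    also have "inner V V = K" by (simp add: inner_self_orthcols[OF VtV] K_def)
    finally show ?thesis by simp
  qed
  have SP0: "0 \<le> SP" unfolding SP_def by (intro sum_nonneg) simp
  have "(frob (Vh ** Ob - V))\<^sup>2 \<le> 2 * X2" using frobeq ineq Msq by simp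
  also have "2 * X2 \<le> 64 * T / \<gamma>\<^sup>2 * SP"
  proof -
    have g2: "\<gamma>\<^sup>2 > 0" using gpos by simp
    have a: "\<gamma>\<^sup>2 * X2 \<le> 16 * (T * SP)" using main6 Ebd by linarith
    have b: "0 \<le> T * SP" using SP0 by (simp add: T_def)
    have c1: "\<gamma>\<^sup>2 * (2 * X2) = 2 * (\<gamma>\<^sup>2 * X2)" by simp
    have c2: "64 * T * SP = 64 * (T * SP)" by simp
    have "\<gamma>\<^sup>2 * (2 * X2) \<le> 64 * T * SP" unfolding c1 c2 using a b by linarith
    then have "2 * X2 \<le> 64 * T * SP / \<gamma>\<^sup>2"
      using g2 by (simp add: le_divide_eq mult.commute)
    then show ?thesis by simp
  qed
  finally show ?thesis using orthO unfolding T_def SP_def by blast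
qed

end
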